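(* Let $X \subset \mathbb{R}^d$ be a finite set of $n = |X| \geq 2$ points, and let $x^*, y^* \in X$, $x^* \neq y^*$, be a pair of distinct points minimizing $\|x - y\|^2$ over all pairs of distinct points of $X$. Let $\kappa_\sigma(x,y) = \exp\left(-\|x-y\|^2/\sigma\right)$ be the RBF kernel with bandwidth $\sigma > 0$, and suppose \[ \sigma \leq \frac{\|x^* - y^*\|^2}{\log(3n)} . \] Then, for any $k$ and any $k$-partition $\pi_1,\dots,\pi_k$ of $X$ used as the current partition, {\tt Kernel $k$-means} run with $\kappa_\sigma$ makes no cluster reassignments; that is, for every $x \in X$, if $x \in \pi_j$ then $\|\phi(x) - m_j\|^2 \leq \|\phi(x) - m_i\|^2$ for all $i = 1,\dots,k$.
   Context: Norms are Euclidean and $\log$ is the natural logarithm. A $k$-partition of $X$ is a collection of $k$ non-empty, pairwise disjoint subsets $\pi_1,\dots,\pi_k$ (clusters) whose union is $X$; $n_i = |\pi_i|$. For a positive definite kernel $\kappa$ with implicit feature map $\phi$, the feature-space centroid of cluster $\pi_i$ is $m_i = \frac{1}{n_i}\sum_{x\in\pi_i}\phi(x)$, and the squared feature-space distance is computed as \[ \|\phi(x) - m_i\|^2 = \kappa(x,x) - \frac{2\sum_{y\in\pi_i}\kappa(x,y)}{n_i} + \frac{\sum_{y,z\in\pi_i}\kappa(y,z)}{n_i^2}. \] {\tt Kernel $k$-means} is Lloyd's algorithm using these distances: starting from a $k$-partition, it repeatedly reassigns each point to the cluster whose feature-space centroid is closest to it (a point is moved out of its current cluster only if some other cluster's centroid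 is strictly closer), until no point changes cluster. *)

theory Defs
  imports "HOL-Analysis.Analysis"
begin

definition rbf_kernel :: "real \<Rightarrow> 'a::real_normed_vector \<Rightarrow> 'a \<Rightarrow> real" where
  "rbf_kernel \<sigma> x y = exp (- (norm (x - y))\<^sup>2 / \<sigma>)"

text \<open>Squared feature-space distance from phi(x) to the centroid of cluster C,
  computed via the kernel trick.\<close>
definition feat_dist :: "('a \<Rightarrow> 'a \<Rightarrow> real) \<Rightarrow> 'a set \<Rightarrow> 'a \<Rightarrow> real" where
  "feat_dist \<kappa> C x =
     \<kappa> x x - 2 * (\<Sum>y\<in>C. \<kappa> x y) / real (card C)
     + (\<Sum>y\<in>C. \<Sum>z\<in>C. \<kappa> y z) / (real (card C))\<^sup>2"

definition is_k_partition :: "'a set \<Rightarrow> nat \<Rightarrow> (nat \<Rightarrow> 'a set) \<Rightarrow> bool" where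
  "is_k_partition X k P \<longleftrightarrow>
     (\<forall>i<k. P i \<noteq> {}) \<and>
     (\<forall>i<k. \<forall>j<k. i \<noteq> j \<longrightarrow> P i \<inter> P j = {}) \<and>
     (\<Union>i<k. P i) = X"

end

theory Submission
  imports Defs
begin

lemma row_ge:
  fixes K :: "'a \<Rightarrow> 'a \<Rightarrow> real"
  assumes "finite C" "x \<in> C" "K x x = 1" "\<forall>y\<in>C. K x y \<ge> 0"
  shows "(\<Sum>y\<in>C. K x y) \<ge> 1"
proof -
  have "(\<Sum>y\<in>C. K x y) = K x x + (\<Sum>y\<in>C-{x}. K x y)"
    using assms by (simp add: sum.remove)
  moreover have "(\<Sum>y\<in>C-{x}. K x y) \<ge> 0" using assms by (intro sum_nonneg) auto
  ultimately show ?thesis using assms by simp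
qed

lemma row_le_in:
  fixes K :: "'a \<Rightarrow> 'a \<Rightarrow> real"
  assumes "finite C" "x \<in> C" "K x x = 1" "\<forall>y\<in>C. y \<noteq> x \<longrightarrow> K x y \<le> e"
  shows "(\<Sum>y\<in>C. K x y) \<le> 1 + (real (card C) - 1) * e"
proof -
  have "(\<Sum>y\<in>C. K x y) = K x x + (\<Sum>y\<in>C-{x}. K x y)"
    using assms by (simp add: sum.remove)
  moreover have "(\<Sum>y\<in>C-{x}. K x y) \<le> (\<Sum>y\<in>C-{x}. e)" using assms by (intro sum_mono) auto
  moreover have "(\<Sum>y\<in>C-{x}. e) = (real (card C) - 1) * e"
    proof -
    have "card C \<ge> 1" using assms(1,2) by (metis One_nat_def Suc_leI card_gt_0_iff empty_iff)
    thus ?thesis using assms by (simp add: card_Diff_singleton of_nat_diff)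
  qed
  ultimately show ?thesis using assms(3) by linarith
qed

lemma row_le_out:
  fixes K :: "'a \<Rightarrow> 'a \<Rightarrow> real"
  assumes "finite C" "\<forall>y\<in>C. K x y \<le> e"
  shows "(\<Sum>y\<in>C. K x y) \<le> real (card C) * e"
proof -
  have "(\<Sum>y\<in>C. K x y) \<le> (\<Sum>y\<in>C. e)" using assms by (intro sum_mono) auto
  then show ?thesis by simp
qed

lemma fd_upper:
  fixes K :: "'a \<Rightarrow> 'a \<Rightarrow> real"
  assumes "finite C" "x \<in> C" "\<forall>y\<in>C. K y y = 1"
    "\<forall>y\<in>C. \<forall>z\<in>C. K y z \<ge> 0"
    "\<forall>y\<in>C. \<forall>z\<in>C. y \<noteq> z \<longrightarrow> K y z \<le> e" "e \<ge> 0"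
  shows "feat_dist K C x \<le> 1 - 1 / real (card C) + e"
proof -
  define a where "a = real (card C)"
  have "C \<noteq> {}" using assms(2) by blast
  hence a1: "a \<ge> 1" using assms by (simp add: a_def card_gt_0_iff Suc_le_eq)
  have S: "(\<Sum>y\<in>C. K x y) \<ge> 1" using row_ge[of C x K] assms by auto
  have T: "(\<Sum>y\<in>C. \<Sum>z\<in>C. K y z) \<le> (\<Sum>y\<in>C. 1 + (a - 1) * e)"
    unfolding a_def using assms by (intro sum_mono row_le_in) auto
  hence T': "(\<Sum>y\<in>C. \<Sum>z\<in>C. K y z) \<le> a * (1 + (a - 1) * e)" by (simp add: a_def)
  have "feat_dist K C x = 1 - 2 * (\<Sum>y\<in>C. K x y) / a + (\<Sum>y\<in>C. \<Sum>z\<in>C. K y z) / a\<^sup>2"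
    using assms by (simp add: feat_dist_def a_def)
  also have "\<dots> \<le> 1 - 2 * 1 / a + a * (1 + (a - 1) * e) / a\<^sup>2"
    using S T' a1 by (intro add_mono diff_mono divide_right_mono divide_left_mono) auto
  also have "\<dots> = 1 - 1 / a + (a - 1) / a * e"
    using a1 by (simp add: field_simps power2_eq_square)
  also have "\<dots> \<le> 1 - 1 / a + e"
    using a1 assms(6) by (simp add: pos_divide_le_eq algebra_simps)
  finally show ?thesis by (simp add: a_def)
qed

lemma fd_lower:
  fixes K :: "'a \<Rightarrow> 'a \<Rightarrow> real"
  assumes "finite C" "C \<noteq> {}" "\<forall>y\<in>C. K y y = 1" "K x x = 1"
    "\<forall>y\<in>C. \<forall>z\<in>C. K y z \<ge> 0"
    "\<forall>y\<in>C. K x y \<le> e"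
  shows "feat_dist K C x \<ge> 1 - 2 * e + 1 / real (card C)"
proof -
  define b where "b = real (card C)"
  have b1: "b \<ge> 1" using assms by (simp add: b_def card_gt_0_iff Suc_le_eq)
  have S: "(\<Sum>y\<in>C. K x y) \<le> b * e" unfolding b_def using row_le_out[of C K x e] assms by auto
  have T: "(\<Sum>y\<in>C. 1) \<le> (\<Sum>y\<in>C. \<Sum>z\<in>C. K y z)"
    using assms by (intro sum_mono row_ge) auto
  hence T': "b \<le> (\<Sum>y\<in>C. \<Sum>z\<in>C. K y z)" by (simp add: b_def)
  have "1 - 2 * e + 1 / b = 1 - 2 * (b * e) / b + b / b\<^sup>2"
    using b1 by (simp add: field_simps power2_eq_square)
  also have "\<dots> \<le> 1 - 2 * (\<Sum>y\<in>C. K x y) / b + (\<Sum>y\<in>C. \<Sum>z\<in>C. K y z) / b\<^sup>2"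
    using S T' b1 by (intro add_mono diff_mono divide_right_mono) auto
  also have "\<dots> = feat_dist K C x"
    by (simp add: feat_dist_def b_def assms)
  finally show ?thesis by (simp add: b_def)
qed

theorem theorem1:
  fixes X :: "('d::euclidean_space) set" and xs ys :: 'd and \<sigma> :: real
    and k :: nat and P :: "nat \<Rightarrow> 'd set"
  assumes "finite X" and "card X \<ge> 2"
    and "xs \<in> X" and "ys \<in> X" and "xs \<noteq> ys"
    and "\<forall>x\<in>X. \<forall>y\<in>X. x \<noteq> y \<longrightarrow> (norm (xs - ys))\<^sup>2 \<le> (norm (x - y))\<^sup>2"
    and "\<sigma> > 0"
    and "\<sigma> \<le> (norm (xs - ys))\<^sup>2 / ln (3 * real (card X))"
    and "is_k_partition X k P"
  shows "\<forall>x\<in>X. \<forall>j<k. x \<in> P j \<longrightarrow>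
           (\<forall>i<k. feat_dist (rbf_kernel \<sigma>) (P j) x \<le> feat_dist (rbf_kernel \<sigma>) (P i) x)"
proof (intro ballI allI impI)
  fix x j i assume x: "x \<in> X" and j: "j < k" and xj: "x \<in> P j" and i: "i < k"
  define n where "n = real (card X)"
  define D where "D = (norm (xs - ys))\<^sup>2"
  define e where "e = 1 / (3 * n)"
  define K :: "'d \<Rightarrow> 'd \<Rightarrow> real" where "K = rbf_kernel \<sigma>"
  have n2: "n \<ge> 2" using assms(2) by (simp add: n_def)
  have lnpos: "ln (3 * n) > 0" using n2 by simp
  have "\<sigma> * ln (3 * n) \<le> D" using assms(8) lnpos by (simp add: n_def D_def pos_le_divide_eq)
  hence Dl: "ln (3 * n) \<le> D / \<sigma>" using assms(7) by (simp add: pos_le_divide_eq mult.commute)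
  have e0: "e \<ge> 0" using n2 by (simp add: e_def)
  have Kdiag: "K y y = 1" for y by (simp add: K_def rbf_kernel_def)
  have Knn: "K y z \<ge> 0" for y z by (simp add: K_def rbf_kernel_def)
  have Kle: "K y z \<le> e" if "y \<in> X" "z \<in> X" "y \<noteq> z" for y z
  proof -
    have "D \<le> (norm (y - z))\<^sup>2" using assms(6) that by (simp add: D_def)
    hence "D / \<sigma> \<le> (norm (y - z))\<^sup>2 / \<sigma>" using assms(7) by (simp add: divide_right_mono)
    hence "ln (3 * n) \<le> (norm (y - z))\<^sup>2 / \<sigma>" using Dl by linarith
    hence "exp (- ((norm (y - z))\<^sup>2 / \<sigma>)) \<le> exp (- ln (3 * n))" by simp
    also have "\<dots> = e" using n2 by (simp add: e_def exp_minus inverse_eq_divide)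
    finally show ?thesis by (simp add: K_def rbf_kernel_def)
  qed
  have part: "\<forall>i<k. P i \<noteq> {}" "\<forall>i<k. \<forall>j<k. i \<noteq> j \<longrightarrow> P i \<inter> P j = {}" "(\<Union>i<k. P i) = X"
    using assms(9) unfolding is_k_partition_def by auto
  have sub: "P l \<subseteq> X" if "l < k" for l using part(3) that by auto
  have fin: "finite (P l)" if "l < k" for l using sub[OF that] assms(1) finite_subset by auto
  show "feat_dist (rbf_kernel \<sigma>) (P j) x \<le> feat_dist (rbf_kernel \<sigma>) (P i) x"
  proof (cases "i = j")
    case True then show ?thesis by simp
  next
    case False
    have xi: "x \<notin> P i" using part(2) i j False xj by blast
    have up: "feat_dist K (P j) x \<le> 1 - 1 / real (card (P j)) + e"
      using fin[OF j] xj Kdiag Knn Kle sub[OF j] e0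
      by (intro fd_upper) (auto intro!: Kle)
    have lo: "feat_dist K (P i) x \<ge> 1 - 2 * e + 1 / real (card (P i))"
      using fin[OF i] part(1) i Kdiag Knn Kle sub[OF i] x xi
      by (intro fd_lower) (auto intro!: Kle)
    have cb: "real (card (P i)) \<le> n" using card_mono[OF assms(1) sub[OF i]] by (simp add: n_def)
    have cb0: "real (card (P i)) > 0" using fin[OF i] part(1) i by (simp add: card_gt_0_iff)
    have ca0: "real (card (P j)) > 0" using fin[OF j] xj by (auto simp add: card_gt_0_iff)
    have "3 * e = 1 / n" using n2 by (simp add: e_def)
    also have "\<dots> \<le> 1 / real (card (P i))" using cb cb0 by (simp add: frac_le)
    finally have "3 * e \<le> 1 / real (card (P i))" .
    moreover have "1 / real (card (P j)) \<ge> 0" using ca0 by simp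
    ultimately show ?thesis using up lo unfolding K_def by linarith
  qed
qed

end
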